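(* Let $(\mathcal{M},\delta)$ be a path-connected metric space and let $P\subset\mathcal{M}$ be a finite set with $|P|\ge 2$. Then $GR_P\ge 1$.
   Context: For a metric space $(\mathcal{M},\delta)$ and a finite set $P\subset\mathcal{M}$ with $|P|\ge 2$, define $r_P=\min_{p,q\in P,\,p\neq q}\delta(p,q)/2$, $R_P=\sup_{x\in\mathcal{M}}\min_{p\in P}\delta(x,p)$, and the gap ratio $GR_P=R_P/r_P$. *)

theory Defs
  imports "HOL-Analysis.Analysis" "HOL-Library.Extended_Real"
begin

definition packing_radius :: "'a::metric_space set \<Rightarrow> real" where
  "packing_radius P = Min {dist p q | p q. p \<in> P \<and> q \<in> P \<and> p \<noteq> q} / 2"

text \<open>Covering radius: sup over the whole space of the distance to the nearest point of P.
  Taken in the extended reals, since the space may be unbounded.\<close>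
definition covering_radius :: "'a::metric_space set \<Rightarrow> ereal" where
  "covering_radius P = (SUP x\<in>(UNIV::'a set). ereal (Min ((\<lambda>p. dist x p) ` P)))"

definition gap_ratio :: "'a::metric_space set \<Rightarrow> ereal" where
  "gap_ratio P = covering_radius P / ereal (packing_radius P)"

end

theory Submission
  imports Defs
begin

lemma infdist_fin:
  fixes A :: "'a::metric_space set"
  assumes "finite A" "A \<noteq> {}"
  obtains a where "a \<in> A" "infdist x A = dist x a"
proof -
  have "infdist x A = Min (dist x ` A)"
    unfolding infdist_def using assms by (simp add: cInf_eq_Min)
  moreover have "Min (dist x ` A) \<in> dist x ` A" using assms by (intro Min_in) auto
  ultimately show ?thesis using that by auto
qed

theorem lemma1:
  fixes P :: "'a::metric_space set"
  assumes "path_connected (UNIV :: 'a set)"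
    and "finite P" and "card P \<ge> 2"
  shows "gap_ratio P \<ge> 1"
proof -
  define D where "D = {dist p q | p q. p \<in> P \<and> q \<in> P \<and> p \<noteq> q}"
  have Dfin: "finite D" unfolding D_def
  proof -
    have "{dist p q | p q. p \<in> P \<and> q \<in> P \<and> p \<noteq> q} \<subseteq> (\<lambda>(p,q). dist p q) ` (P \<times> P)" by auto
    thus "finite {dist p q | p q. p \<in> P \<and> q \<in> P \<and> p \<noteq> q}"
      using assms(2) finite_subset by blast
  qed
  obtain p q where pq: "p \<in> P" "q \<in> P" "p \<noteq> q"
  proof -
    have "\<not> card P \<le> Suc 0" using assms(3) by simp
    thus ?thesis using that card_le_Suc0_iff_eq[OF assms(2)] by blast
  qed
  have Dne: "D \<noteq> {}" unfolding D_def using pq by blast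
  have Dpos: "\<forall>d\<in>D. d > 0" unfolding D_def by auto
  define r where "r = Min D / 2"
  have rpos: "r > 0" unfolding r_def using Dfin Dne Dpos by auto
  have rdef: "packing_radius P = r" unfolding packing_radius_def r_def D_def by simp
  define A where "A = P - {p}"
  have Afin: "finite A" "A \<noteq> {}" "A \<subseteq> P" unfolding A_def using assms(2) pq by auto
  have Acl: "closed A" using Afin(1) finite_imp_closed by blast
  define h where "h = (\<lambda>x. dist x p - infdist x A)"
  have hc: "continuous_on UNIV h" unfolding h_def
    by (intro continuous_intros continuous_on_infdist)
  have conn: "connected (h ` UNIV)"
    using connected_continuous_image[OF hc path_connected_imp_connected[OF assms(1)]] .
  have h1: "h p < 0"
  proof -
    obtain a where "a \<in> A" "infdist p A = dist p a" using infdist_fin[OF Afin(1) Afin(2)] by blast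
    thus ?thesis unfolding h_def A_def by auto
  qed
  have h2: "h q > 0"
    unfolding h_def using pq infdist_le[of q A] A_def by force
  have "0 \<in> h ` UNIV"
    using connectedD_interval[OF conn, of "h p" "h q" 0] h1 h2 by auto
  then obtain x where hx: "h x = 0" by auto
  define t where "t = dist x p"
  have it: "infdist x A = t" using hx unfolding h_def t_def by simp
  obtain s where s0: "s \<in> A" "infdist x A = dist x s" using infdist_fin[OF Afin(1) Afin(2), of x] by blast
  have s: "s \<in> A" "dist x s = t" using s0 it by simp_all
  have "dist p s \<in> D" unfolding D_def using s(1) A_def pq by auto
  hence "Min D \<le> dist p s" using Dfin by simp
  also have "\<dots> \<le> dist x p + dist x s" by (metis dist_commute dist_triangle)
  finally have rt: "r \<le> t" unfolding r_def using s(2) t_def by simp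
  have mt: "Min ((\<lambda>p. dist x p) ` P) = t"
  proof (rule antisym)
    show "Min ((\<lambda>p. dist x p) ` P) \<le> t" using pq assms(2) t_def by simp
    show "t \<le> Min ((\<lambda>p. dist x p) ` P)"
    proof (subst Min_ge_iff)
      show "finite ((\<lambda>p. dist x p) ` P)" using assms(2) by simp
      show "(\<lambda>p. dist x p) ` P \<noteq> {}" using pq by auto
      show "\<forall>a\<in>(\<lambda>p. dist x p) ` P. t \<le> a"
      proof
        fix a assume "a \<in> (\<lambda>p. dist x p) ` P"
        then obtain s' where "s' \<in> P" "a = dist x s'" by auto
        thus "t \<le> a" using infdist_le[of s' A x] it t_def A_def by (cases "s' = p") auto
      qed
    qed
  qed
  have "ereal t \<le> covering_radius P"
    unfolding covering_radius_def using mt by (metis SUP_upper UNIV_I)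
  hence cr: "ereal r \<le> covering_radius P" using rt by (meson ereal_less_eq(3) order_trans)
  show ?thesis unfolding gap_ratio_def rdef
  proof (cases "covering_radius P")
    case (real c)
    thus "1 \<le> covering_radius P / ereal r" using cr rpos by simp
  next
    case PInf thus "1 \<le> covering_radius P / ereal r" using rpos by simp
  next
    case MInf thus "1 \<le> covering_radius P / ereal r" using cr by simp
  qed
qed

end
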